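(* In the single-authority continuum model described in the context, fix a state $\omega$. An allocation $\mu$ is implemented by a quota policy if and only if it is also implemented by a monotone priority policy.
   Context: An authority allocates a resource of measure $q\in(0,1)$ to a continuum of agents with types $\theta=(s,m)\in[0,1]\times\mathcal M$ ($\mathcal M$ finite), whose measure in state $\omega$ has a density $f_\omega$. Allocations are measurable $\mu:\Theta\to\{0,1\}$ (equality of allocations understood up to measure zero). A priority policy $P$ assigns each type $(s,m)$ a priority $P(s,m)$; the priority mechanism allocates the resource in order of priorities until measure $q$ is allocated, ties broken uniformly at random. $P$ is monotone if $P(s,m)$ is strictly increasing in $s$ for each $m$. A quota policy $(Q,D)$ reserves measure $Q_m$ for group $m$, with $Q_R=q-\sum_mQ_m$ open to all, and a bijection (precedence order) $D:\mathcal M\cup\{R\}\to\{1,\dots,|\mathcal M|+1\}$; the quota mechanism allocates measure $Q_{D^{-1}(k)}$ to agents of group $D^{-1}(k)$ (to all agents if $D^{-1}(k)=R$) in ascending order of $k$, in descending order of score within each round; if there are too few agents of a group to fill its quota, the residual capacity is allocated in a final round open to all. *)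

theory Defs
  imports "HOL-Analysis.Analysis"
begin

text \<open>The fixed state omega is implicit: f m s is the density f_omega(s, m) of agents
  of group m with score s.  Types with s outside [0,1] carry no mass.\<close>

definition type_space :: "(real \<times> 'm) set" where
  "type_space = {0..1} \<times> UNIV"

definition pop :: "('m \<Rightarrow> real \<Rightarrow> real) \<Rightarrow> (real \<times> 'm) measure" where
  "pop f = density (lborel \<Otimes>\<^sub>M count_space UNIV)
             (\<lambda>(s, m). ennreal (indicator {0..1} s * f m s))"

text \<open>Expected (fractional) assignment of the priority mechanism: types with
  priority above the cutoff c are served, types below are not, and the tie class
  at the cutoff is rationed uniformly at random (so each of its members gets the
  resource with the probability below).\<close>
definition prio_outcome ::
  "('m \<Rightarrow> real \<Rightarrow> real) \<Rightarrow> real \<Rightarrow> (real \<times> 'm \<Rightarrow> real) \<Rightarrow> real \<times> 'm \<Rightarrow> real" where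
  "prio_outcome f q P \<theta> =
    (let N = (\<lambda>t. measure (pop f) {\<eta> \<in> type_space. P \<eta> > t});
         c = Inf {t. N t \<le> q}
     in if measure (pop f) type_space \<le> q then 1
        else if P \<theta> > c then 1
        else if P \<theta> < c then 0
        else (q - N c) / measure (pop f) {\<eta> \<in> type_space. P \<eta> = c})"

definition monotone_priority :: "(real \<times> 'm \<Rightarrow> real) \<Rightarrow> bool" where
  "monotone_priority P \<longleftrightarrow> (\<forall>m. strict_mono_on {0..1} (\<lambda>s. P (s, m)))"

definition implemented_by_monotone_priority ::
  "('m \<Rightarrow> real \<Rightarrow> real) \<Rightarrow> real \<Rightarrow> (real \<times> 'm \<Rightarrow> real) \<Rightarrow> bool" where
  "implemented_by_monotone_priority f q \<mu> \<longleftrightarrow>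
     (\<exists>P. monotone_priority P \<and> (AE \<theta> in pop f. \<mu> \<theta> = prio_outcome f q P \<theta>))"

definition alloc_round ::
  "('m \<Rightarrow> real \<Rightarrow> real) \<Rightarrow> (real \<times> 'm) set \<Rightarrow> real \<Rightarrow> (real \<times> 'm) set \<Rightarrow> (real \<times> 'm) set" where
  "alloc_round f E x A =
    (let av = E - A
     in if measure (pop f) av \<le> x then A \<union> av
        else A \<union> {\<theta> \<in> av. fst \<theta> > Inf {t. measure (pop f) {\<eta> \<in> av. fst \<eta> > t} \<le> x}})"

text \<open>Groups are 'm option: Some m is group m, None is the open category R.
  The state is (allocated set, accumulated unused group capacity).\<close>
definition quota_step ::
  "('m::finite \<Rightarrow> real \<Rightarrow> real) \<Rightarrow> real \<Rightarrow> ('m \<Rightarrow> real) \<Rightarrow> 'm option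
     \<Rightarrow> (real \<times> 'm) set \<times> real \<Rightarrow> (real \<times> 'm) set \<times> real" where
  "quota_step f q Q g st =
    (case g of
       None \<Rightarrow> (alloc_round f UNIV (q - sum Q UNIV) (fst st), snd st)
     | Some m \<Rightarrow>
         (let A' = alloc_round f {\<theta>. snd \<theta> = m} (Q m) (fst st)
          in (A', snd st + (Q m - measure (pop f) (A' - fst st)))))"

definition quota_outcome ::
  "('m::finite \<Rightarrow> real \<Rightarrow> real) \<Rightarrow> real \<Rightarrow> ('m \<Rightarrow> real) \<Rightarrow> ('m option \<Rightarrow> nat)
     \<Rightarrow> real \<times> 'm \<Rightarrow> real" where
  "quota_outcome f q Q D =
    (let st = fold (quota_step f q Q) (map (inv D) [1..<CARD('m) + 2]) ({}, 0)
     in indicator (alloc_round f UNIV (snd st) (fst st)))"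

definition quota_policy :: "real \<Rightarrow> ('m::finite \<Rightarrow> real) \<Rightarrow> ('m option \<Rightarrow> nat) \<Rightarrow> bool" where
  "quota_policy q Q D \<longleftrightarrow> (\<forall>m. 0 \<le> Q m) \<and> sum Q UNIV \<le> q
      \<and> bij_betw D UNIV {1..CARD('m) + 1}"

definition implemented_by_quota ::
  "('m::finite \<Rightarrow> real \<Rightarrow> real) \<Rightarrow> real \<Rightarrow> (real \<times> 'm \<Rightarrow> real) \<Rightarrow> bool" where
  "implemented_by_quota f q \<mu> \<longleftrightarrow>
     (\<exists>Q D. quota_policy q Q D \<and> (AE \<theta> in pop f. \<mu> \<theta> = quota_outcome f q Q D \<theta>))"

end

theory Submission
  imports Defs
begin


locale popsetup =
  fixes f :: "'m::finite \<Rightarrow> real \<Rightarrow> real"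
  assumes fmeas: "\<And>m. f m \<in> borel_measurable borel"
    and fnn: "\<And>m s. 0 \<le> f m s"
    and fint: "\<And>m. set_integrable lborel {0..1} (f m)"
begin

abbreviation "N0 \<equiv> (lborel \<Otimes>\<^sub>M count_space (UNIV::'m set))"
definition "dens = (\<lambda>(s, m). ennreal (indicator {0..1} s * f m s))"

lemma pop_eq: "pop f = density N0 dens" unfolding pop_def dens_def by simp

lemma g_meas: "dens \<in> borel_measurable N0"
proof -
  have "(\<lambda>x. (\<lambda>m x. ennreal (indicator {0..1} (fst x) * f m (fst x))) (snd x) x) \<in> borel_measurable N0"
  proof (rule measurable_compose_countable'[where I=UNIV and g=snd])
    fix m :: 'm
    have [measurable]: "f m \<in> borel_measurable borel" by (rule fmeas)
    show "(\<lambda>x. ennreal (indicator {0..1} (fst x) * f m (fst x))) \<in> borel_measurable N0"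
      by measurable
  qed (auto intro!: countable_finite)
  then show ?thesis unfolding dens_def by (simp add: case_prod_beta')
qed

lemma sets_pop: "sets (pop f) = sets N0" by (simp add: pop_eq)
lemma space_pop[simp]: "space (pop f) = UNIV" by (simp add: pop_eq space_pair_measure)

lemma UNIV_N0[simp]: "UNIV \<in> sets N0"
  using sets.top[of N0] by (simp add: space_pair_measure)

lemma N0_sf: "sigma_finite_measure (count_space (UNIV::'m set))"
  by (rule sigma_finite_measure_count_space_finite) simp

lemma fin: "finite_measure (pop f)"
proof
  interpret C: sigma_finite_measure "count_space (UNIV::'m set)" by (rule N0_sf)
  have "emeasure (pop f) (space (pop f)) = (\<integral>\<^sup>+ x. dens x \<partial>N0)"
    unfolding pop_eq using g_meas
    by (subst emeasure_density) (auto simp: space_pair_measure intro!: nn_integral_cong)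
  also have "\<dots> = (\<integral>\<^sup>+ s. \<integral>\<^sup>+ m. dens (s, m) \<partial>count_space UNIV \<partial>lborel)"
    using C.nn_integral_fst[OF g_meas] by simp
  also have "\<dots> = (\<integral>\<^sup>+ s. (\<Sum>m\<in>UNIV. dens (s, m)) \<partial>lborel)"
    by (simp add: nn_integral_count_space_finite)
  also have "\<dots> = (\<Sum>m\<in>UNIV. \<integral>\<^sup>+ s. dens (s, m) \<partial>lborel)"
    apply (rule nn_integral_sum) unfolding dens_def using fmeas by auto
  also have "\<dots> < \<infinity>"
  proof -
   have "(\<integral>\<^sup>+ s. dens (s, m) \<partial>lborel) < \<infinity>" for m
   proof -
    have "integrable lborel (\<lambda>s. indicator {0..1} s *\<^sub>R f m s)"
      using fint[of m] by (simp add: set_integrable_def)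
    then have "(\<integral>\<^sup>+s. ennreal (norm (indicator {0..1} s *\<^sub>R f m s)) \<partial>lborel) < \<infinity>"
      by (simp add: integrable_iff_bounded)
    moreover have "(\<integral>\<^sup>+s. ennreal (norm (indicator {0..1} s *\<^sub>R f m s)) \<partial>lborel) = (\<integral>\<^sup>+ s. dens (s, m) \<partial>lborel)"
      unfolding dens_def using fnn by (auto intro!: nn_integral_cong simp: indicator_def)
    ultimately show "(\<integral>\<^sup>+ s. dens (s, m) \<partial>lborel) < \<infinity>" by simp
   qed
   then show ?thesis unfolding infinity_ennreal_def by (subst ennreal_sum_less_top) auto
  qed
  finally show "emeasure (pop f) (space (pop f)) \<noteq> \<infinity>" by simp
qed

sublocale P: finite_measure "pop f" by (rule fin)


lemma slice_sets:
  assumes "\<And>m. {s. (s, m) \<in> X} \<in> sets borel"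
  shows "X \<in> sets (pop f)"
proof -
  have "X = (\<Union>m\<in>UNIV. {s. (s, m) \<in> X} \<times> {m})" by auto
  also have "\<dots> \<in> sets N0"
    using assms by (intro sets.finite_UN) auto
  finally show ?thesis by (simp add: sets_pop)
qed

lemma null_N0_pop: "Y \<in> null_sets N0 \<Longrightarrow> Y \<in> null_sets (pop f)"
  unfolding pop_eq using g_meas
  by (subst null_sets_density_iff) (auto dest: AE_not_in elim: AE_mp)

lemma null_sub: "Y \<in> null_sets (pop f) \<Longrightarrow> X \<in> sets (pop f) \<Longrightarrow> X \<subseteq> Y \<Longrightarrow> X \<in> null_sets (pop f)"
  using null_set_Int2[of Y "pop f" X] by (simp add: Int_absorb1)

lemma fin_null:
  assumes "finite X" shows "X \<in> null_sets (pop f)"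
proof -
  interpret C: sigma_finite_measure "count_space (UNIV::'m set)" by (rule N0_sf)
  have "fst ` X \<in> null_sets lborel" using assms by (intro finite_imp_null_set_lborel) auto
  then have "fst ` X \<times> (UNIV::'m set) \<in> null_sets N0" by auto
  then have *: "fst ` X \<times> (UNIV::'m set) \<in> null_sets (pop f)" by (rule null_N0_pop)
  have "X \<in> sets (pop f)"
  proof (rule slice_sets)
    fix m
    have "{s. (s, m) \<in> X} \<subseteq> fst ` X" by force
    then have "finite {s. (s, m) \<in> X}" using assms by (meson finite_imageI finite_subset)
    then show "{s. (s, m) \<in> X} \<in> sets borel" by (simp add: finite_imp_closed borel_closed)
  qed
  then show ?thesis using * by (intro null_sub[OF *]) force+
qed

lemma AE_ts: "AE \<theta> in pop f. \<theta> \<in> type_space"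
  unfolding pop_eq using g_meas
  by (subst AE_density) (auto intro!: AE_I2 simp: dens_def type_space_def indicator_def of_bool_def split: if_splits)

end


context popsetup begin

lemma cutoff:
  fixes X :: "(real \<times> 'm) set" and h :: "real \<times> 'm \<Rightarrow> real" and x :: real
  assumes Xs: "X \<in> sets (pop f)"
    and Ss: "\<And>t. {\<theta>\<in>X. h \<theta> > t} \<in> sets (pop f)"
    and big: "measure (pop f) X > x"
    and ne: "0 < x \<or> (\<exists>t0. measure (pop f) {\<theta>\<in>X. h \<theta> > t0} \<le> x)"
  defines "c \<equiv> Inf {t. measure (pop f) {\<theta>\<in>X. h \<theta> > t} \<le> x}"
  shows "measure (pop f) {\<theta>\<in>X. h \<theta> > c} \<le> x"
    and "x \<le> measure (pop f) {\<theta>\<in>X. h \<theta> \<ge> c}"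
    and "{\<theta>\<in>X. h \<theta> \<ge> c} \<in> sets (pop f)"
proof -
  define m where "m t = measure (pop f) {\<theta>\<in>X. h \<theta> > t}" for t
  define T where "T = {t. m t \<le> x}"
  have cT: "c = Inf T" unfolding c_def T_def m_def by simp
  have anti: "m t' \<le> m t" if "t \<le> t'" for t t'
    unfolding m_def using that by (intro P.finite_measure_mono[OF _ Ss]) auto
  have Tup: "t' \<in> T" if "t \<in> T" "t \<le> t'" for t t'
    using that anti unfolding T_def by force
  have "T \<noteq> {}"
  proof (cases "\<exists>t0. m t0 \<le> x")
    case True then show ?thesis unfolding T_def by auto
  next
    case False
    then have x0: "0 < x" using ne unfolding m_def by auto
    have "(\<lambda>n. measure (pop f) {\<theta>\<in>X. h \<theta> > real n}) \<longlonglongrightarrow> measure (pop f) (\<Inter>n. {\<theta>\<in>X. h \<theta> > real n})"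
      by (rule P.finite_Lim_measure_decseq) (auto simp: Ss decseq_def)
    moreover have "(\<Inter>n. {\<theta>\<in>X. h \<theta> > real n}) = {}"
    proof -
      have False if "\<theta> \<in> X" "\<forall>n. h \<theta> > real n" for \<theta>
        using that reals_Archimedean2[of "h \<theta>"] by (meson less_asym)
      then show ?thesis by auto
    qed
    ultimately have "(\<lambda>n. m (real n)) \<longlonglongrightarrow> 0" unfolding m_def by simp
    from order_tendstoD(2)[OF this x0] obtain n where "m (real n) < x"
      by (auto simp: eventually_sequentially)
    then show ?thesis unfolding T_def by (auto intro!: exI[of _ "real n"])
  qed
  have "(\<lambda>n. m (- real n)) \<longlonglongrightarrow> measure (pop f) (\<Union>n. {\<theta>\<in>X. h \<theta> > - real n})"
    unfolding m_def by (rule P.finite_Lim_measure_incseq) (auto simp: Ss incseq_def)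
  moreover have "(\<Union>n. {\<theta>\<in>X. h \<theta> > - real n}) = X"
  proof -
    have "\<exists>n. h \<theta> > - real n" for \<theta>
      using reals_Archimedean2[of "- h \<theta>"] by (auto simp: minus_less_iff)
    then show ?thesis by auto
  qed
  ultimately have "(\<lambda>n. m (- real n)) \<longlonglongrightarrow> measure (pop f) X" by simp
  from order_tendstoD(1)[OF this big] obtain n0 where n0: "m (- real n0) > x"
    by (auto simp: eventually_sequentially)
  have bdd: "bdd_below T"
  proof
    fix t assume "t \<in> T"
    show "- real n0 \<le> t"
    proof (rule ccontr)
      assume "\<not> - real n0 \<le> t"
      then have "m (- real n0) \<le> m t" by (intro anti) auto
      with \<open>t \<in> T\<close> n0 show False unfolding T_def by auto
    qed
  qed
  have inT: "c + 1 / real (Suc n) \<in> T" for n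
  proof -
    have "Inf T < c + 1 / real (Suc n)" unfolding cT by simp
    then obtain t where "t \<in> T" "t < c + 1 / real (Suc n)"
      using cInf_less_iff[OF \<open>T \<noteq> {}\<close> bdd] by auto
    then show ?thesis using Tup by auto
  qed
  have "(\<lambda>n. m (c + 1 / real (Suc n))) \<longlonglongrightarrow> measure (pop f) (\<Union>n. {\<theta>\<in>X. h \<theta> > c + 1 / real (Suc n)})"
    unfolding m_def
  proof (rule P.finite_Lim_measure_incseq)
    show "incseq (\<lambda>n. {\<theta>\<in>X. h \<theta> > c + 1 / real (Suc n)})"
    proof (rule incseq_SucI)
      fix n
      have "1 / real (Suc (Suc n)) \<le> 1 / real (Suc n)" by (simp add: frac_le)
      then show "{\<theta>\<in>X. h \<theta> > c + 1 / real (Suc n)} \<subseteq> {\<theta>\<in>X. h \<theta> > c + 1 / real (Suc (Suc n))}"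
        by auto
    qed
  qed (auto simp: Ss)
  moreover have "(\<Union>n. {\<theta>\<in>X. h \<theta> > c + 1 / real (Suc n)}) = {\<theta>\<in>X. h \<theta> > c}"
  proof -
    have "\<exists>n. h \<theta> > c + 1 / real (Suc n)" if hc: "h \<theta> > c" for \<theta>
    proof -
      obtain n where "inverse (real (Suc n)) < h \<theta> - c"
        using reals_Archimedean[of "h \<theta> - c"] hc by auto
      then show ?thesis by (auto simp: field_simps)
    qed
    moreover have "c < h \<theta>" if "c + 1 / real (Suc n) < h \<theta>" for n \<theta>
    proof -
      have "c < c + 1 / real (Suc n)" by simp
      then show ?thesis using that by linarith
    qed
    ultimately show ?thesis by blast
  qed
  ultimately have lim1: "(\<lambda>n. m (c + 1 / real (Suc n))) \<longlonglongrightarrow> m c" unfolding m_def by simp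
  show "measure (pop f) {\<theta>\<in>X. h \<theta> > c} \<le> x"
    using LIMSEQ_le_const2[OF lim1] inT unfolding T_def m_def by auto
  have notT: "c - 1 / real (Suc n) \<notin> T" for n
  proof
    assume "c - 1 / real (Suc n) \<in> T"
    then have "c \<le> c - 1 / real (Suc n)" unfolding cT using cInf_lower[OF _ bdd] by blast
    then show False by simp
  qed
  have "(\<lambda>n. m (c - 1 / real (Suc n))) \<longlonglongrightarrow> measure (pop f) (\<Inter>n. {\<theta>\<in>X. h \<theta> > c - 1 / real (Suc n)})"
    unfolding m_def
  proof (rule P.finite_Lim_measure_decseq)
    show "decseq (\<lambda>n. {\<theta>\<in>X. h \<theta> > c - 1 / real (Suc n)})"
    proof (rule decseq_SucI)
      fix n
      have "1 / real (Suc (Suc n)) \<le> 1 / real (Suc n)" by (simp add: frac_le)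
      then show "{\<theta>\<in>X. h \<theta> > c - 1 / real (Suc (Suc n))} \<subseteq> {\<theta>\<in>X. h \<theta> > c - 1 / real (Suc n)}"
        by auto
    qed
  qed (auto simp: Ss)
  moreover have eqI: "(\<Inter>n. {\<theta>\<in>X. h \<theta> > c - 1 / real (Suc n)}) = {\<theta>\<in>X. h \<theta> \<ge> c}"
  proof -
    have "h \<theta> \<ge> c" if "\<forall>n. h \<theta> > c - 1 / real (Suc n)" for \<theta>
    proof (rule ccontr)
      assume "\<not> h \<theta> \<ge> c"
      then obtain n where "inverse (real (Suc n)) < c - h \<theta>"
        using reals_Archimedean[of "c - h \<theta>"] by auto
      moreover have "h \<theta> > c - 1 / real (Suc n)" using that by blast
      ultimately show False by (auto simp: field_simps)
    qed
    moreover have "c - 1 / real (Suc n) < h \<theta>" if "c \<le> h \<theta>" for n \<theta>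
    proof -
      have "c - 1 / real (Suc n) < c" by simp
      then show ?thesis using that by linarith
    qed
    ultimately show ?thesis by blast
  qed
  ultimately have lim2: "(\<lambda>n. m (c - 1 / real (Suc n))) \<longlonglongrightarrow> measure (pop f) {\<theta>\<in>X. h \<theta> \<ge> c}" by simp
  show "x \<le> measure (pop f) {\<theta>\<in>X. h \<theta> \<ge> c}"
  proof (rule LIMSEQ_le_const[OF lim2])
    show "\<exists>N. \<forall>n\<ge>N. x \<le> m (c - 1 / real (Suc n))"
      using notT unfolding T_def by (metis linorder_le_cases mem_Collect_eq)
  qed
  have "(\<Inter>n. {\<theta>\<in>X. h \<theta> > c - 1 / real (Suc n)}) \<in> sets (pop f)"
    using Ss by auto
  then show "{\<theta>\<in>X. h \<theta> \<ge> c} \<in> sets (pop f)" using eqI by simp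
qed

end



definition UC :: "(real \<times> 'm) set \<Rightarrow> bool" where
  "UC A \<longleftrightarrow> (\<forall>s s' m. 0 \<le> s \<longrightarrow> s \<le> s' \<longrightarrow> s' \<le> 1 \<longrightarrow> (s, m) \<in> A \<longrightarrow> (s', m) \<in> A)"

definition grpclosed :: "(real \<times> 'm) set \<Rightarrow> bool" where
  "grpclosed E \<longleftrightarrow> (\<forall>s s' m. (s, m) \<in> E \<longrightarrow> (s', m) \<in> E)"

context popsetup begin

lemma out_null:
  assumes "X \<in> sets (pop f)" "X \<inter> type_space = {}"
  shows "measure (pop f) X = 0"
proof -
  have "AE \<theta> in pop f. \<theta> \<notin> X" using AE_ts assms(2) by (auto elim: AE_mp)
  then have "emeasure (pop f) X = 0" using assms(1) by (subst (asm) AE_iff_measurable[of X]) auto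
  then show ?thesis by (simp add: measure_def)
qed

lemma fst_gt_sets: "{\<theta>. fst \<theta> > t} \<in> sets (pop f)"
  by (rule slice_sets) auto

lemma fst_eq_null: "X \<subseteq> {\<theta>. fst \<theta> = t} \<Longrightarrow> X \<in> sets (pop f) \<Longrightarrow> measure (pop f) X = 0"
proof -
  assume a: "X \<subseteq> {\<theta>. fst \<theta> = t}" "X \<in> sets (pop f)"
  have "finite ({t} \<times> (UNIV :: 'm set))" by simp
  then have "{t} \<times> (UNIV :: 'm set) \<in> null_sets (pop f)" by (rule fin_null)
  then have "X \<in> null_sets (pop f)" by (rule null_sub[OF _ a(2)]) (use a(1) in auto)
  then show ?thesis by (simp add: measure_def null_sets_def)
qed

lemma AR:
  assumes Es: "E \<in> sets (pop f)" and As: "A \<in> sets (pop f)" and x0: "0 \<le> x" and gE: "grpclosed E"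
  defines "A' \<equiv> alloc_round f E x A"
  shows "A \<subseteq> A'" "A' \<subseteq> A \<union> E" "A' \<in> sets (pop f)" "UC A \<Longrightarrow> UC A'"
    "measure (pop f) A' = measure (pop f) A + min x (measure (pop f) (E - A))"
    "measure (pop f) (E - A) \<le> x \<Longrightarrow> A' = A \<union> E"
proof -
  define av where "av = E - A"
  have avs: "av \<in> sets (pop f)" unfolding av_def using Es As by auto
  define c where "c = Inf {t. measure (pop f) {\<eta> \<in> av. fst \<eta> > t} \<le> x}"
  define B where "B = {\<theta> \<in> av. fst \<theta> > c}"
  have Bs: "B \<in> sets (pop f)"
    unfolding B_def using avs fst_gt_sets[of c] by (simp add: Collect_conj_eq Int_def[symmetric] sets.Int)
  have A'eq: "A' = (if measure (pop f) av \<le> x then A \<union> av else A \<union> B)"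
    unfolding A'_def alloc_round_def Let_def av_def B_def c_def by simp
  have disj: "A \<inter> av = {}" "A \<inter> B = {}" unfolding av_def B_def by auto
  have Bsub: "B \<subseteq> av" unfolding B_def by auto
  have Bmeas: "measure (pop f) B = x" if big: "\<not> measure (pop f) av \<le> x"
  proof -
    have Ss: "{\<theta>\<in>av. fst \<theta> > t} \<in> sets (pop f)" for t
      using avs fst_gt_sets[of t] by (simp add: Collect_conj_eq Int_def[symmetric] sets.Int)
    have ne: "0 < x \<or> (\<exists>t0. measure (pop f) {\<theta>\<in>av. fst \<theta> > t0} \<le> x)"
    proof -
      have "measure (pop f) {\<theta>\<in>av. fst \<theta> > 1} = 0"
        by (rule out_null[OF Ss]) (auto simp: type_space_def)
      then show ?thesis using x0 by (metis order_refl)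
    qed
    note cu = cutoff[of av fst x, OF avs Ss _ ne, folded c_def]
    have le: "measure (pop f) B \<le> x" using cu(1) big unfolding B_def by simp
    have "{\<theta>\<in>av. fst \<theta> \<ge> c} = B \<union> {\<theta>\<in>av. fst \<theta> = c}" unfolding B_def by auto
    moreover have "{\<theta>\<in>av. fst \<theta> = c} \<in> sets (pop f)"
    proof -
      have "{\<theta>\<in>av. fst \<theta> = c} = {\<theta>\<in>av. fst \<theta> \<ge> c} - B" unfolding B_def by auto
      then show ?thesis using cu(3) big Bs by auto
    qed
    moreover have "measure (pop f) {\<theta>\<in>av. fst \<theta> = c} = 0"
      by (rule fst_eq_null) (use calculation in auto)
    moreover have "B \<inter> {\<theta>\<in>av. fst \<theta> = c} = {}" unfolding B_def by auto
    ultimately have "measure (pop f) {\<theta>\<in>av. fst \<theta> \<ge> c} = measure (pop f) B"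
      using Bs P.finite_measure_Union[OF Bs] by simp
    then show ?thesis using cu(2) big le by simp
  qed
  show "A \<subseteq> A'" unfolding A'eq by auto
  show "A' \<subseteq> A \<union> E" unfolding A'eq av_def B_def by auto
  show "A' \<in> sets (pop f)" unfolding A'eq using As avs Bs by auto
  show "measure (pop f) A' = measure (pop f) A + min x (measure (pop f) (E - A))"
  proof (cases "measure (pop f) av \<le> x")
    case True
    then show ?thesis using P.finite_measure_Union[OF As avs disj(1)] unfolding A'eq
      by (simp add: av_def)
  next
    case False
    then show ?thesis unfolding A'eq using As Bs disj Bmeas[OF False]
      by (simp add: P.finite_measure_Union av_def)
  qed
  show "measure (pop f) (E - A) \<le> x \<Longrightarrow> A' = A \<union> E"
    unfolding A'eq av_def by auto
  show "UC A'" if uc: "UC A"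
    unfolding UC_def
  proof (intro allI impI)
    fix s s' m assume h: "0 \<le> s" "s \<le> s'" "s' \<le> 1" "(s, m) \<in> A'"
    show "(s', m) \<in> A'"
    proof (cases "(s, m) \<in> A")
      case True
      then show ?thesis using uc h \<open>A \<subseteq> A'\<close> unfolding UC_def by blast
    next
      case False
      show ?thesis
      proof (cases "(s', m) \<in> A")
        case True then show ?thesis using \<open>A \<subseteq> A'\<close> by blast
      next
        case False2: False
        have "(s, m) \<in> E" using h(4) False \<open>A' \<subseteq> A \<union> E\<close> by blast
        then have "(s', m) \<in> E" using gE unfolding grpclosed_def by blast
        then have "(s', m) \<in> av" using False2 unfolding av_def by auto
        then show ?thesis using h False unfolding A'eq B_def av_def by (auto split: if_splits)
      qed
    qed
  qed
qed

end



definition grp :: "'m \<Rightarrow> (real \<times> 'm) set" where "grp m = {\<theta>. snd \<theta> = m}"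

definition cap :: "real \<Rightarrow> ('m::finite \<Rightarrow> real) \<Rightarrow> 'm option \<Rightarrow> real" where
  "cap q Q g = (case g of None \<Rightarrow> q - sum Q UNIV | Some m \<Rightarrow> Q m)"

context popsetup begin

lemma grp_sets: "grp m \<in> sets (pop f)"
  by (rule slice_sets) (auto simp: grp_def)

lemma grp_closed: "grpclosed (grp m)" "grpclosed UNIV"
  by (auto simp: grp_def grpclosed_def)

definition Inv :: "real \<Rightarrow> ('m \<Rightarrow> real) \<Rightarrow> 'm option set \<Rightarrow> (real \<times> 'm) set \<times> real \<Rightarrow> bool" where
  "Inv q Q S st \<longleftrightarrow> (let A = fst st; r = snd st; M = measure (pop f) in
     A \<in> sets (pop f) \<and> UC A \<and> 0 \<le> r \<and> M A + r \<le> sum (cap q Q) S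
     \<and> (M A + r = sum (cap q Q) S \<or> A = UNIV)
     \<and> (\<forall>m. Some m \<in> S \<longrightarrow> min (Q m) (M (grp m)) \<le> M (A \<inter> grp m)))"

lemma Inv_step:
  assumes Q0: "\<And>m. 0 \<le> Q m" and Qq: "sum Q UNIV \<le> q"
    and I: "Inv q Q S st" and gS: "g \<notin> S" and finS: "finite S"
  shows "Inv q Q (insert g S) (quota_step f q Q g st)"
proof -
  obtain A r where st: "st = (A, r)" by (cases st)
  note I = I[unfolded Inv_def st, simplified Let_def fst_conv snd_conv]
  have As: "A \<in> sets (pop f)" and ucA: "UC A" and r0: "0 \<le> r"
    and le: "measure (pop f) A + r \<le> sum (cap q Q) S"
    and eqU: "measure (pop f) A + r = sum (cap q Q) S \<or> A = UNIV"
    and gr: "\<And>m. Some m \<in> S \<Longrightarrow> min (Q m) (measure (pop f) (grp m)) \<le> measure (pop f) (A \<inter> grp m)"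
    using I by auto
  have sum_ins: "sum (cap q Q) (insert g S) = sum (cap q Q) S + cap q Q g"
    using gS finS by simp
  have mono: "measure (pop f) (A \<inter> grp m) \<le> measure (pop f) (A' \<inter> grp m)"
    if "A \<subseteq> A'" "A' \<in> sets (pop f)" for A' m
    using that grp_sets by (intro P.finite_measure_mono) auto
  show ?thesis
  proof (cases g)
    case None
    define x where "x = q - sum Q UNIV"
    have x0: "0 \<le> x" using Qq unfolding x_def by simp
    define A' where "A' = alloc_round f UNIV x A"
    have step: "quota_step f q Q g st = (A', r)"
      unfolding quota_step_def None st A'_def x_def by simp
    have Us: "UNIV \<in> sets (pop f)" using sets.top[of "pop f"] by simp
    note ar = AR[OF Us As x0 grp_closed(2), folded A'_def]
    have capg: "cap q Q g = x" unfolding cap_def None x_def by simp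
    have "measure (pop f) A' + r \<le> sum (cap q Q) S + x"
      using ar(5) le by linarith
    moreover have "measure (pop f) A' + r = sum (cap q Q) S + x \<or> A' = UNIV"
    proof (cases "A = UNIV")
      case True then show ?thesis using ar(1) by auto
    next
      case False
      then have e: "measure (pop f) A + r = sum (cap q Q) S" using eqU by auto
      show ?thesis
      proof (cases "measure (pop f) (UNIV - A) \<le> x")
        case True then show ?thesis using ar(6) by auto
      next
        case False then show ?thesis using ar(5) e by auto
      qed
    qed
    moreover have "min (Q m) (measure (pop f) (grp m)) \<le> measure (pop f) (A' \<inter> grp m)"
      if "Some m \<in> insert g S" for m
      using that None gr[of m] mono[OF ar(1) ar(3), of m] by auto
    ultimately show ?thesis
      unfolding step Inv_def Let_def sum_ins capg using ar r0 ucA by auto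
  next
    case (Some m0)
    define A' where "A' = alloc_round f (grp m0) (Q m0) A"
    have A'eq: "alloc_round f {\<theta>. snd \<theta> = m0} (Q m0) A = A'" unfolding A'_def grp_def ..
    define r' where "r' = r + (Q m0 - measure (pop f) (A' - A))"
    have step: "quota_step f q Q g st = (A', r')"
      unfolding quota_step_def Some st r'_def by (simp add: Let_def A'eq)
    note ar = AR[OF grp_sets[of m0] As Q0[of m0] grp_closed(1)[of m0], folded A'_def]
    have capg: "cap q Q g = Q m0" unfolding cap_def Some by simp
    have dA: "measure (pop f) (A' - A) = min (Q m0) (measure (pop f) (grp m0 - A))"
      using ar(5) P.finite_measure_Diff[OF ar(3) As ar(1)] by simp
    have r'0: "0 \<le> r'" unfolding r'_def dA using r0 by simp
    have sumeq: "measure (pop f) A' + r' = measure (pop f) A + r + Q m0"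
      unfolding r'_def using P.finite_measure_Diff[OF ar(3) As ar(1)] by simp
    have "measure (pop f) A' + r' = sum (cap q Q) S + Q m0 \<or> A' = UNIV"
    proof (cases "A = UNIV")
      case True then show ?thesis using ar(1) by auto
    next
      case False then show ?thesis using eqU sumeq by auto
    qed
    moreover have "min (Q m) (measure (pop f) (grp m)) \<le> measure (pop f) (A' \<inter> grp m)"
      if "Some m \<in> insert g S" for m
    proof (cases "m = m0")
      case False
      then show ?thesis using that Some gr[of m] mono[OF ar(1) ar(3), of m] by auto
    next
      case True
      have u: "A' \<inter> grp m0 = (A \<inter> grp m0) \<union> (A' - A)" using ar(1) ar(2) by auto
      have Ag: "A \<inter> grp m0 \<in> sets (pop f)" using As grp_sets by auto
      have dsj: "(A \<inter> grp m0) \<inter> (A' - A) = {}" by auto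
      have m1: "measure (pop f) (A' \<inter> grp m0) = measure (pop f) (A \<inter> grp m0) + measure (pop f) (A' - A)"
        unfolding u using P.finite_measure_Union[OF Ag _ dsj] ar(3) As by auto
      have "grp m0 - A = grp m0 - (A \<inter> grp m0)" by auto
      then have m2: "measure (pop f) (grp m0 - A) = measure (pop f) (grp m0) - measure (pop f) (A \<inter> grp m0)"
        using P.finite_measure_Diff[OF grp_sets Ag] by auto
      have "0 \<le> measure (pop f) (A \<inter> grp m0)" by simp
      then show ?thesis unfolding True m1 dA m2 using Q0[of m0] by linarith
    qed
    ultimately show ?thesis
      unfolding step Inv_def Let_def sum_ins capg using ar r'0 sumeq le ucA by auto
  qed
qed

lemma Inv_fold:
  assumes Q0: "\<And>m. 0 \<le> Q m" and Qq: "sum Q UNIV \<le> q"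
  shows "distinct xs \<Longrightarrow> set xs \<inter> S = {} \<Longrightarrow> finite S \<Longrightarrow> Inv q Q S st
    \<Longrightarrow> Inv q Q (S \<union> set xs) (fold (quota_step f q Q) xs st)"
proof (induction xs arbitrary: S st)
  case Nil then show ?case by simp
next
  case (Cons a xs)
  have "Inv q Q (insert a S) (quota_step f q Q a st)"
    using Cons.prems by (intro Inv_step[OF Q0 Qq]) auto
  then have "Inv q Q (insert a S \<union> set xs) (fold (quota_step f q Q) xs (quota_step f q Q a st))"
    using Cons.prems by (intro Cons.IH) auto
  then show ?case by simp
qed

end



lemma cap_UNIV: "sum (cap q Q) (UNIV :: 'm::finite option set) = q"
proof -
  have "sum (cap q Q) (UNIV :: 'm option set) = cap q Q None + sum (cap q Q) (range Some)"
    unfolding UNIV_option_conv by (subst sum.insert) auto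
  also have "sum (cap q Q) (range Some) = sum Q UNIV"
    by (subst sum.reindex) (auto simp: cap_def)
  finally show ?thesis by (simp add: cap_def)
qed

lemma list_perm:
  fixes D :: "'m::finite option \<Rightarrow> nat"
  assumes "bij_betw D UNIV {1..CARD('m) + 1}"
  shows "distinct (map (inv D) [1..<CARD('m) + 2])" "set (map (inv D) [1..<CARD('m) + 2]) = UNIV"
proof -
  have b: "bij_betw (inv D) {1..CARD('m) + 1} UNIV" using bij_betw_inv_into[OF assms] .
  have s: "set [1..<CARD('m) + 2] = {1..CARD('m) + 1}" by auto
  show "distinct (map (inv D) [1..<CARD('m) + 2])"
    using b unfolding distinct_map s bij_betw_def by simp
  show "set (map (inv D) [1..<CARD('m) + 2]) = UNIV"
    using b unfolding s set_map bij_betw_def by simp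
qed

context popsetup begin

lemma quota_final:
  assumes qp: "quota_policy q Q D"
  obtains F where "quota_outcome f q Q D = indicator F" "F \<in> sets (pop f)" "UC F"
    "measure (pop f) F \<le> q" "measure (pop f) F = q \<or> F = UNIV"
    "\<And>m. min (Q m) (measure (pop f) (grp m)) \<le> measure (pop f) (F \<inter> grp m)"
proof -
  have Q0: "\<And>m. 0 \<le> Q m" and Qq: "sum Q UNIV \<le> q" and bD: "bij_betw D UNIV {1..CARD('m) + 1}"
    using qp unfolding quota_policy_def by auto
  define xs where "xs = map (inv D) [1..<CARD('m) + 2]"
  define st where "st = fold (quota_step f q Q) xs ({}, 0)"
  have I0: "Inv q Q {} ({}, 0)" unfolding Inv_def UC_def by simp
  have "Inv q Q ({} \<union> set xs) st"
    unfolding st_def using list_perm[OF bD] I0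
    by (intro Inv_fold[OF Q0 Qq]) (auto simp: xs_def)
  then have I: "Inv q Q UNIV st" using list_perm[OF bD] by (simp add: xs_def)
  obtain A r where st': "st = (A, r)" by (cases st)
  note I = I[unfolded Inv_def st' cap_UNIV, simplified Let_def fst_conv snd_conv]
  have As: "A \<in> sets (pop f)" and ucA: "UC A" and r0: "0 \<le> r"
    and le: "measure (pop f) A + r \<le> q"
    and eqU: "measure (pop f) A + r = q \<or> A = UNIV"
    and gr: "\<And>m. min (Q m) (measure (pop f) (grp m)) \<le> measure (pop f) (A \<inter> grp m)"
    using I by auto
  define F where "F = alloc_round f UNIV r A"
  have Us: "UNIV \<in> sets (pop f)" using sets.top[of "pop f"] by simp
  note ar = AR[OF Us As r0 grp_closed(2), folded F_def]
  have out: "quota_outcome f q Q D = indicator F"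
    unfolding quota_outcome_def Let_def F_def st_def[unfolded xs_def, symmetric] st' by simp
  show ?thesis
  proof (rule that[OF out ar(3) ar(4)[OF ucA]])
    show "measure (pop f) F \<le> q" using ar(5) le by linarith
    show "measure (pop f) F = q \<or> F = UNIV"
    proof (cases "A = UNIV")
      case True then show ?thesis using ar(1) by auto
    next
      case False
      then have e: "measure (pop f) A + r = q" using eqU by auto
      show ?thesis
      proof (cases "measure (pop f) (UNIV - A) \<le> r")
        case True then show ?thesis using ar(6) by auto
      next
        case False then show ?thesis using ar(5) e by auto
      qed
    qed
    show "min (Q m) (measure (pop f) (grp m)) \<le> measure (pop f) (F \<inter> grp m)" for m
    proof -
      have "measure (pop f) (A \<inter> grp m) \<le> measure (pop f) (F \<inter> grp m)"
        using ar(1) ar(3) grp_sets[of m] by (intro P.finite_measure_mono) auto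
      then show ?thesis using gr[of m] by linarith
    qed
  qed
qed

end



lemma exD: "\<exists>D :: 'm::finite option \<Rightarrow> nat. bij_betw D UNIV {1..CARD('m) + 1}"
proof -
  have "card (UNIV :: 'm option set) = CARD('m) + 1"
    unfolding UNIV_option_conv by (subst card_insert_disjoint) (auto simp: card_image)
  then show ?thesis by (subst bij_betw_iff_card) auto
qed

lemma subsingleton_finite: "(\<And>x y. x \<in> S \<Longrightarrow> y \<in> S \<Longrightarrow> x = y) \<Longrightarrow> finite S"
proof (cases "S = {}")
  case False
  then obtain x where "x \<in> S" by auto
  moreover assume "\<And>x y. x \<in> S \<Longrightarrow> y \<in> S \<Longrightarrow> x = y"
  ultimately have "S \<subseteq> {x}" by auto
  then show ?thesis using finite_subset by auto
qed simp

lemma UC_nested: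
  assumes "UC X" "UC Y" "X \<subseteq> grp m \<inter> type_space" "Y \<subseteq> grp m \<inter> type_space"
  shows "X \<subseteq> Y \<or> Y \<subseteq> X"
proof (rule ccontr)
  assume "\<not> (X \<subseteq> Y \<or> Y \<subseteq> X)"
  then obtain a b where ab: "a \<in> X" "a \<notin> Y" "b \<in> Y" "b \<notin> X" by auto
  have ha: "snd a = m \<and> fst a \<in> {0..1}" using ab(1) assms(3) by (auto simp: grp_def type_space_def mem_Times_iff)
  have hb: "snd b = m \<and> fst b \<in> {0..1}" using ab(3) assms(4) by (auto simp: grp_def type_space_def mem_Times_iff)
  define s where "s = fst a"
  define s' where "s' = fst b"
  have a: "a = (s, m)" "0 \<le> s" "s \<le> 1" using ha unfolding s_def by (metis prod.collapse, auto)
  have b: "b = (s', m)" "0 \<le> s'" "s' \<le> 1" using hb unfolding s'_def by (metis prod.collapse, auto)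
  show False
  proof (cases "s \<le> s'")
    case True then show False using assms(1) ab a b unfolding UC_def by blast
  next
    case False then show False using assms(2) ab a b unfolding UC_def by (meson linorder_le_cases)
  qed
qed

context popsetup begin

lemma meas0_null: "A \<in> sets (pop f) \<Longrightarrow> measure (pop f) A = 0 \<Longrightarrow> A \<in> null_sets (pop f)"
  by (simp add: P.emeasure_eq_measure null_sets_def)

lemma AE_nested:
  assumes "X \<in> sets (pop f)" "Y \<in> sets (pop f)" "X \<subseteq> Y \<or> Y \<subseteq> X"
    "measure (pop f) X = measure (pop f) Y"
  shows "AE \<theta> in pop f. (\<theta> \<in> X) = (\<theta> \<in> Y)"
proof (cases "X \<subseteq> Y")
  case True
  then have "measure (pop f) (Y - X) = 0" using P.finite_measure_Diff[OF assms(2,1)] assms(4) by simp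
  then have "Y - X \<in> null_sets (pop f)" using assms by (intro meas0_null) auto
  from AE_not_in[OF this] show ?thesis by (rule AE_mp) (use True in \<open>auto intro!: AE_I2\<close>)
next
  case False
  then have YX: "Y \<subseteq> X" using assms(3) by auto
  then have "measure (pop f) (X - Y) = 0" using P.finite_measure_Diff[OF assms(1,2)] assms(4) by simp
  then have "X - Y \<in> null_sets (pop f)" using assms by (intro meas0_null) auto
  from AE_not_in[OF this] show ?thesis by (rule AE_mp) (use YX in \<open>auto intro!: AE_I2\<close>)
qed

lemma meas_ts: "X \<in> sets (pop f) \<Longrightarrow> measure (pop f) (X \<inter> type_space) = measure (pop f) X"
proof -
  assume "X \<in> sets (pop f)"
  moreover have "type_space \<in> sets (pop f)" by (rule slice_sets) (auto simp: type_space_def)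
  moreover have "AE \<theta> in pop f. (\<theta> \<in> X \<inter> type_space) = (\<theta> \<in> X)"
    using AE_ts by (rule AE_mp) (auto intro!: AE_I2)
  ultimately show ?thesis by (intro measure_eq_AE) auto
qed

lemma sum_grp:
  assumes "X \<in> sets (pop f)"
  shows "(\<Sum>m\<in>UNIV. measure (pop f) (X \<inter> grp m)) = measure (pop f) X"
proof -
  have "X = (\<Union>m\<in>UNIV. X \<inter> grp m)" by (auto simp: grp_def)
  moreover have "measure (pop f) (\<Union>m\<in>UNIV. X \<inter> grp m) = (\<Sum>m\<in>UNIV. measure (pop f) (X \<inter> grp m))"
    using assms grp_sets by (intro P.finite_measure_finite_Union) (auto simp: disjoint_family_on_def grp_def)
  ultimately show ?thesis by simp
qed

lemma mono_clamp:
  assumes "monotone_priority P"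
  shows "(\<lambda>s. P (max 0 (min 1 s), m)) \<in> borel_measurable borel"
proof (rule borel_measurable_mono)
  show "mono (\<lambda>s. P (max 0 (min 1 s), m))"
  proof
    fix s s' :: real assume "s \<le> s'"
    then have le: "max 0 (min 1 s) \<le> max 0 (min 1 s')" by simp
    have sm: "strict_mono_on {0..1} (\<lambda>s. P (s, m))" using assms unfolding monotone_priority_def by auto
    show "P (max 0 (min 1 s), m) \<le> P (max 0 (min 1 s'), m)"
    proof (cases "max 0 (min 1 s) = max 0 (min 1 s')")
      case True then show ?thesis by simp
    next
      case False
      have lt: "max 0 (min 1 s) < max 0 (min 1 s')" using le False by (rule le_neq_trans)
      have i1: "max 0 (min 1 s) \<in> {0..1}" and i2: "max 0 (min 1 s') \<in> {0..1}" by auto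
      show ?thesis using strict_mono_onD[OF sm i1 i2 lt] by simp
    qed
  qed
qed

lemma prio_sets:
  assumes "monotone_priority P"
  shows "{\<eta> \<in> type_space. P \<eta> > t} \<in> sets (pop f)" "{\<eta> \<in> type_space. P \<eta> = t} \<in> sets (pop f)"
proof -
  show "{\<eta> \<in> type_space. P \<eta> > t} \<in> sets (pop f)"
  proof (rule slice_sets)
    fix m
    have [measurable]: "(\<lambda>s. P (max 0 (min 1 s), m)) \<in> borel_measurable borel" by (rule mono_clamp[OF assms])
    have "{s. (s, m) \<in> {\<eta> \<in> type_space. P \<eta> > t}} = {s \<in> {0..1}. P (max 0 (min 1 s), m) > t}"
      by (auto simp: type_space_def)
    also have "\<dots> \<in> sets borel" by measurable
    finally show "{s. (s, m) \<in> {\<eta> \<in> type_space. P \<eta> > t}} \<in> sets borel" .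
  qed
  show "{\<eta> \<in> type_space. P \<eta> = t} \<in> sets (pop f)"
  proof (rule slice_sets)
    fix m
    have [measurable]: "(\<lambda>s. P (max 0 (min 1 s), m)) \<in> borel_measurable borel" by (rule mono_clamp[OF assms])
    have "{s. (s, m) \<in> {\<eta> \<in> type_space. P \<eta> = t}} = {s \<in> {0..1}. P (max 0 (min 1 s), m) = t}"
      by (auto simp: type_space_def)
    also have "\<dots> \<in> sets borel" by measurable
    finally show "{s. (s, m) \<in> {\<eta> \<in> type_space. P \<eta> = t}} \<in> sets borel" .
  qed
qed

lemma tie_null:
  assumes "monotone_priority P"
  shows "{\<eta> \<in> type_space. P \<eta> = t} \<in> null_sets (pop f)"
proof -
  have fin: "finite {s \<in> {0..1}. P (s, m) = t}" for m
  proof (rule subsingleton_finite)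
    fix x y assume "x \<in> {s \<in> {0..1}. P (s, m) = t}" "y \<in> {s \<in> {0..1}. P (s, m) = t}"
    moreover have "strict_mono_on {0..1} (\<lambda>s. P (s, m))" using assms unfolding monotone_priority_def by auto
    ultimately show "x = y"
    proof (cases rule: linorder_cases[of x y])
      case less then show ?thesis using strict_mono_onD[OF \<open>strict_mono_on {0..1} (\<lambda>s. P (s, m))\<close>, of x y] \<open>x \<in> _\<close> \<open>y \<in> _\<close> by auto
    next
      case greater then show ?thesis using strict_mono_onD[OF \<open>strict_mono_on {0..1} (\<lambda>s. P (s, m))\<close>, of y x] \<open>x \<in> _\<close> \<open>y \<in> _\<close> by auto
    qed
  qed
  have "{\<eta> \<in> type_space. P \<eta> = t} \<subseteq> (\<Union>m\<in>UNIV. {s \<in> {0..1}. P (s, m) = t} \<times> {m})"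
    by (auto simp: type_space_def)
  moreover have "finite (\<Union>m\<in>UNIV. {s \<in> {0..1}. P (s, m) = t} \<times> {m})" using fin by auto
  ultimately have "finite {\<eta> \<in> type_space. P \<eta> = t}" by (rule finite_subset)
  then show ?thesis by (rule fin_null)
qed

lemma prio_char:
  assumes mp: "monotone_priority P" and q0: "0 < q" and big: "measure (pop f) type_space > q"
  defines "c \<equiv> Inf {t. measure (pop f) {\<eta> \<in> type_space. P \<eta> > t} \<le> q}"
  shows "measure (pop f) {\<eta> \<in> type_space. P \<eta> > c} = q"
    and "AE \<theta> in pop f. prio_outcome f q P \<theta> = indicator {\<eta> \<in> type_space. P \<eta> > c} \<theta>"
proof -
  have tss: "type_space \<in> sets (pop f)" by (rule slice_sets) (auto simp: type_space_def)
  note cu = cutoff[of type_space P q, OF tss prio_sets(1)[OF mp] big, folded c_def]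
  have "{\<eta> \<in> type_space. P \<eta> \<ge> c} = {\<eta> \<in> type_space. P \<eta> > c} \<union> {\<eta> \<in> type_space. P \<eta> = c}" by auto
  moreover have "measure (pop f) {\<eta> \<in> type_space. P \<eta> = c} = 0"
    using tie_null[OF mp, of c] by (simp add: measure_def null_sets_def)
  moreover have "{\<eta> \<in> type_space. P \<eta> > c} \<inter> {\<eta> \<in> type_space. P \<eta> = c} = {}" by auto
  ultimately have "measure (pop f) {\<eta> \<in> type_space. P \<eta> \<ge> c} \<le> measure (pop f) {\<eta> \<in> type_space. P \<eta> > c}"
    using P.finite_measure_Union[OF prio_sets(1)[OF mp, of c] prio_sets(2)[OF mp, of c]] by auto
  then show "measure (pop f) {\<eta> \<in> type_space. P \<eta> > c} = q" using cu(1,2) q0 by linarith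
  have "AE \<theta> in pop f. \<theta> \<notin> {\<eta> \<in> type_space. P \<eta> = c}" using tie_null[OF mp] by (rule AE_not_in)
  then show "AE \<theta> in pop f. prio_outcome f q P \<theta> = indicator {\<eta> \<in> type_space. P \<eta> > c} \<theta>"
    using AE_ts
  proof (elim AE_mp, intro AE_I2 impI)
    fix \<theta> assume "\<theta> \<in> type_space" "\<theta> \<notin> {\<eta> \<in> type_space. P \<eta> = c}"
    then have ne: "P \<theta> \<noteq> c" by auto
    have nb: "\<not> measure (pop f) type_space \<le> q" using big by simp
    have po: "prio_outcome f q P \<theta> = (if P \<theta> > c then 1 else if P \<theta> < c then 0
        else (q - measure (pop f) {\<eta> \<in> type_space. P \<eta> > c}) / measure (pop f) {\<eta> \<in> type_space. P \<eta> = c})"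
      unfolding prio_outcome_def Let_def c_def[symmetric] using nb by (simp only: if_False)
    show "prio_outcome f q P \<theta> = indicator {\<eta> \<in> type_space. P \<eta> > c} \<theta>"
    proof (cases "P \<theta> > c")
      case True then show ?thesis using po \<open>\<theta> \<in> type_space\<close> by simp
    next
      case False then have "P \<theta> < c" using ne by simp
      then show ?thesis using po False by simp
    qed
  qed
qed

end



lemma UC_restrict: "UC F \<Longrightarrow> UC (F \<inter> grp m \<inter> type_space)"
  unfolding UC_def grp_def type_space_def by auto

lemma sum_eq_le:
  fixes a b :: "'a \<Rightarrow> real"
  assumes "finite I" "\<And>i. i \<in> I \<Longrightarrow> a i \<le> b i" "sum a I = sum b I" "i \<in> I"
  shows "a i = b i"
proof -
  have "sum (\<lambda>i. b i - a i) I = 0" using assms(3) by (simp add: sum_subtractf)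
  then have "\<forall>i\<in>I. b i - a i = 0" using assms(1,2) by (subst (asm) sum_nonneg_eq_0_iff) auto
  then show ?thesis using assms(4) by auto
qed

context popsetup begin

lemma tss: "type_space \<in> sets (pop f)" by (rule slice_sets) (auto simp: type_space_def)

lemma measU: "measure (pop f) UNIV = measure (pop f) type_space"
  using meas_ts[of UNIV] sets.top[of "pop f"] by simp

lemma AE_in_F:
  assumes "F \<in> sets (pop f)" "measure (pop f) F = q \<or> F = UNIV" "measure (pop f) type_space \<le> q"
    "measure (pop f) F \<le> q"
  shows "AE \<theta> in pop f. \<theta> \<in> F"
proof (cases "F = UNIV")
  case True then show ?thesis by simp
next
  case False
  have Us: "UNIV \<in> sets (pop f)" using sets.top[of "pop f"] by simp
  have "measure (pop f) (UNIV - F) = measure (pop f) UNIV - measure (pop f) F"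
    using P.finite_measure_Diff[OF Us assms(1)] by simp
  also have "\<dots> \<le> 0" using False assms measU by auto
  finally have "UNIV - F \<in> null_sets (pop f)"
    using assms(1) Us by (intro meas0_null) (auto intro: antisym)
  from AE_not_in[OF this] show ?thesis by auto
qed

lemma prio_one: "measure (pop f) type_space \<le> q \<Longrightarrow> prio_outcome f q P \<theta> = 1"
  unfolding prio_outcome_def Let_def by simp

lemma main:
  assumes q0: "0 < q"
  shows "implemented_by_quota f q \<mu> \<longleftrightarrow> implemented_by_monotone_priority f q \<mu>"
proof
  assume "implemented_by_quota f q \<mu>"
  then obtain Q D where qp: "quota_policy q Q D"
    and ae: "AE \<theta> in pop f. \<mu> \<theta> = quota_outcome f q Q D \<theta>"
    unfolding implemented_by_quota_def by auto
  obtain F where out: "quota_outcome f q Q D = indicator F" and Fs: "F \<in> sets (pop f)" and ucF: "UC F"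
    and Fle: "measure (pop f) F \<le> q" and Feq: "measure (pop f) F = q \<or> F = UNIV"
    using quota_final[OF qp] by metis
  show "implemented_by_monotone_priority f q \<mu>"
  proof (cases "measure (pop f) type_space \<le> q")
    case True
    have mp: "monotone_priority (\<lambda>\<theta>. fst \<theta>)"
      unfolding monotone_priority_def strict_mono_on_def by simp
    have "AE \<theta> in pop f. \<theta> \<in> F" using AE_in_F[OF Fs Feq True Fle] .
    then have "AE \<theta> in pop f. \<mu> \<theta> = prio_outcome f q (\<lambda>\<theta>. fst \<theta>) \<theta>"
      using ae by (elim AE_mp) (auto intro!: AE_I2 simp: out prio_one[OF True])
    then show ?thesis unfolding implemented_by_monotone_priority_def using mp by blast
  next
    case False
    then have big: "measure (pop f) type_space > q" by simp
    have "F \<noteq> UNIV" using Fle big measU by auto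
    then have mF: "measure (pop f) F = q" using Feq by auto
    define P1 where "P1 = (\<lambda>\<theta>. fst \<theta> + 2 * indicator F \<theta>)"
    have mp: "monotone_priority P1"
      unfolding monotone_priority_def strict_mono_on_def
    proof (intro allI impI)
      fix m r s assume h: "r \<in> {0..1::real} \<and> s \<in> {0..1} \<and> r < s"
      have "indicator F (r, m) \<le> (indicator F (s, m) :: real)"
        using ucF h unfolding UC_def indicator_def by fastforce
      then show "P1 (r, m) < P1 (s, m)" unfolding P1_def using h by simp
    qed
    define c where "c = Inf {t. measure (pop f) {\<eta> \<in> type_space. P1 \<eta> > t} \<le> q}"
    note pc = prio_char[OF mp q0 big, folded c_def]
    have H1: "{\<eta> \<in> type_space. P1 \<eta> > 1} = F \<inter> type_space"
      unfolding P1_def type_space_def by (auto simp: indicator_def)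
    have mH1: "measure (pop f) {\<eta> \<in> type_space. P1 \<eta> > 1} = q"
      unfolding H1 meas_ts[OF Fs] mF ..
    have nest: "{\<eta> \<in> type_space. P1 \<eta> > c} \<subseteq> {\<eta> \<in> type_space. P1 \<eta> > 1} \<or>
        {\<eta> \<in> type_space. P1 \<eta> > 1} \<subseteq> {\<eta> \<in> type_space. P1 \<eta> > c}"
      by (cases "c \<le> 1") auto
    have aen: "AE \<theta> in pop f. (\<theta> \<in> {\<eta> \<in> type_space. P1 \<eta> > c}) = (\<theta> \<in> {\<eta> \<in> type_space. P1 \<eta> > 1})"
      using pc(1) mH1 by (intro AE_nested[OF prio_sets(1)[OF mp] prio_sets(1)[OF mp] nest]) simp
    have "AE \<theta> in pop f. \<mu> \<theta> = prio_outcome f q P1 \<theta>"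
      using ae pc(2) aen AE_ts
    proof (elim AE_mp, intro AE_I2 impI)
      fix \<theta> assume "\<theta> \<in> type_space"
        and a1: "(\<theta> \<in> {\<eta> \<in> type_space. P1 \<eta> > c}) = (\<theta> \<in> {\<eta> \<in> type_space. P1 \<eta> > 1})"
        and a2: "prio_outcome f q P1 \<theta> = indicator {\<eta> \<in> type_space. P1 \<eta> > c} \<theta>"
        and a3: "\<mu> \<theta> = quota_outcome f q Q D \<theta>"
      have "(\<theta> \<in> F) = (\<theta> \<in> {\<eta> \<in> type_space. P1 \<eta> > 1})" using H1 \<open>\<theta> \<in> type_space\<close> by auto
      then have "(\<theta> \<in> F) = (\<theta> \<in> {\<eta> \<in> type_space. P1 \<eta> > c})" using a1 by simp
      then show "\<mu> \<theta> = prio_outcome f q P1 \<theta>"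
        unfolding a3 a2 out by (simp add: indicator_def)
    qed
    then show ?thesis unfolding implemented_by_monotone_priority_def using mp by blast
  qed
next
  assume "implemented_by_monotone_priority f q \<mu>"
  then obtain P where mp: "monotone_priority P" and ae: "AE \<theta> in pop f. \<mu> \<theta> = prio_outcome f q P \<theta>"
    unfolding implemented_by_monotone_priority_def by auto
  obtain D :: "'m option \<Rightarrow> nat" where bD: "bij_betw D UNIV {1..CARD('m) + 1}" using exD by blast
  show "implemented_by_quota f q \<mu>"
  proof (cases "measure (pop f) type_space \<le> q")
    case True
    have qp: "quota_policy q (\<lambda>_. 0) D" unfolding quota_policy_def using bD q0 by simp
    obtain F where out: "quota_outcome f q (\<lambda>_. 0) D = indicator F" and Fs: "F \<in> sets (pop f)"
      and Fle: "measure (pop f) F \<le> q" and Feq: "measure (pop f) F = q \<or> F = UNIV"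
      using quota_final[OF qp] by metis
    have "AE \<theta> in pop f. \<theta> \<in> F" using AE_in_F[OF Fs Feq True Fle] .
    then have "AE \<theta> in pop f. \<mu> \<theta> = quota_outcome f q (\<lambda>_. 0) D \<theta>"
      using ae by (elim AE_mp) (auto intro!: AE_I2 simp: out prio_one[OF True])
    then show ?thesis unfolding implemented_by_quota_def using qp by blast
  next
    case False
    then have big: "measure (pop f) type_space > q" by simp
    define c where "c = Inf {t. measure (pop f) {\<eta> \<in> type_space. P \<eta> > t} \<le> q}"
    note pc = prio_char[OF mp q0 big, folded c_def]
    define G where "G = {\<eta> \<in> type_space. P \<eta> > c}"
    have Gs: "G \<in> sets (pop f)" unfolding G_def by (rule prio_sets(1)[OF mp])
    have mG: "measure (pop f) G = q" unfolding G_def by (rule pc(1))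
    define Q where "Q m = measure (pop f) (G \<inter> grp m)" for m
    have sQ: "sum Q UNIV = q" unfolding Q_def sum_grp[OF Gs] mG ..
    have qp: "quota_policy q Q D" unfolding quota_policy_def using bD sQ by (simp add: Q_def)
    obtain F where out: "quota_outcome f q Q D = indicator F" and Fs: "F \<in> sets (pop f)" and ucF: "UC F"
      and Fle: "measure (pop f) F \<le> q" and Feq: "measure (pop f) F = q \<or> F = UNIV"
      and Fgr: "\<And>m. min (Q m) (measure (pop f) (grp m)) \<le> measure (pop f) (F \<inter> grp m)"
      using quota_final[OF qp] by metis
    have "F \<noteq> UNIV" using Fle big measU by auto
    then have mF: "measure (pop f) F = q" using Feq by auto
    have Qle: "Q m \<le> measure (pop f) (F \<inter> grp m)" for m
    proof -
      have "Q m \<le> measure (pop f) (grp m)" unfolding Q_def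
        by (rule P.finite_measure_mono[OF _ grp_sets]) auto
      then show ?thesis using Fgr[of m] by simp
    qed
    have eqm: "measure (pop f) (F \<inter> grp m) = Q m" for m
      using sum_eq_le[of UNIV Q "\<lambda>m. measure (pop f) (F \<inter> grp m)" m] Qle
      unfolding sum_grp[OF Fs] sQ mF by simp
    have ucG: "UC G" unfolding UC_def G_def type_space_def
    proof (intro allI impI)
      fix s s' m assume h: "0 \<le> s" "s \<le> s'" "s' \<le> 1" "(s, m) \<in> {\<eta> \<in> {0..1} \<times> UNIV. c < P \<eta>}"
      have sm: "strict_mono_on {0..1} (\<lambda>s. P (s, m))" using mp unfolding monotone_priority_def by auto
      have "P (s, m) \<le> P (s', m)"
      proof (cases "s = s'")
        case False then show ?thesis using strict_mono_onD[OF sm, of s s'] h by auto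
      qed simp
      then show "(s', m) \<in> {\<eta> \<in> {0..1} \<times> UNIV. c < P \<eta>}" using h by auto
    qed
    have aem: "AE \<theta> in pop f. (\<theta> \<in> F \<inter> grp m \<inter> type_space) = (\<theta> \<in> G \<inter> grp m)" for m
    proof (rule AE_nested)
      show "F \<inter> grp m \<inter> type_space \<in> sets (pop f)" using Fs grp_sets tss by auto
      show "G \<inter> grp m \<in> sets (pop f)" using Gs grp_sets by auto
      have "G \<inter> grp m \<subseteq> grp m \<inter> type_space" unfolding G_def by auto
      moreover have "G \<inter> grp m \<inter> type_space = G \<inter> grp m" unfolding G_def by auto
      then have "UC (G \<inter> grp m)" using UC_restrict[OF ucG, of m] by simp
      ultimately show "F \<inter> grp m \<inter> type_space \<subseteq> G \<inter> grp m \<or> G \<inter> grp m \<subseteq> F \<inter> grp m \<inter> type_space"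
        using UC_nested[OF UC_restrict[OF ucF, of m]] by auto
      have "measure (pop f) (F \<inter> grp m \<inter> type_space) = measure (pop f) (F \<inter> grp m)"
        using meas_ts Fs grp_sets by auto
      then show "measure (pop f) (F \<inter> grp m \<inter> type_space) = measure (pop f) (G \<inter> grp m)"
        using eqm[of m] by (simp add: Q_def)
    qed
    have aeall: "AE \<theta> in pop f. \<forall>m\<in>UNIV. (\<theta> \<in> F \<inter> grp m \<inter> type_space) = (\<theta> \<in> G \<inter> grp m)"
      by (rule AE_finite_allI) (simp, rule aem)
    have "AE \<theta> in pop f. \<mu> \<theta> = quota_outcome f q Q D \<theta>"
      using ae pc(2) aeall AE_ts
    proof (elim AE_mp, intro AE_I2 impI)
      fix \<theta> assume ts: "\<theta> \<in> type_space"
        and a1: "\<forall>m\<in>UNIV. (\<theta> \<in> F \<inter> grp m \<inter> type_space) = (\<theta> \<in> G \<inter> grp m)"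
        and a2: "prio_outcome f q P \<theta> = indicator {\<eta> \<in> type_space. P \<eta> > c} \<theta>"
        and a3: "\<mu> \<theta> = prio_outcome f q P \<theta>"
      have "\<theta> \<in> grp (snd \<theta>)" by (simp add: grp_def)
      then have "(\<theta> \<in> F) = (\<theta> \<in> G)" using a1 ts by auto
      then show "\<mu> \<theta> = quota_outcome f q Q D \<theta>"
        unfolding a3 a2 out G_def[symmetric] by (simp add: indicator_def)
    qed
    then show ?thesis unfolding implemented_by_quota_def using qp by blast
  qed
qed

end


theorem proposition13:
  fixes f :: "'m::finite \<Rightarrow> real \<Rightarrow> real"
    and q :: real
    and \<mu> :: "real \<times> 'm \<Rightarrow> real"
  assumes "0 < q" and "q < 1"
    and "\<And>m. f m \<in> borel_measurable borel"
    and "\<And>m s. 0 \<le> f m s"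
    and "\<And>m. set_integrable lborel {0..1} (f m)"
    and "\<mu> \<in> borel_measurable (pop f)"
    and "\<And>\<theta>. \<mu> \<theta> \<in> {0, 1}"
  shows "implemented_by_quota f q \<mu> \<longleftrightarrow> implemented_by_monotone_priority f q \<mu>"
proof -
  interpret popsetup f using assms(3,4,5) by unfold_locales auto
  show ?thesis using main[OF assms(1)] .
qed

end
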